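(* Let $G=(V,E)$ be a task-assistance graph and let $\pi=\langle v_0,\dots,v_k\rangle$ ($k\ge 1$) be a path in $G$ that admits at least one timing profile. Then there exists an optimal timing profile $\mathcal{T}=\langle t_0,\dots,t_{k-1}\rangle$ for $\pi$ such that $t_i\in C_i$ for every $i\in\{0,\dots,k-1\}$.
   Context: A task-assistance graph is a directed graph $G=(V,E)$ in which every edge $e$ has a length $\ell(e)\ge 0$ and every vertex $v$ has a finite set $\mathcal{I}(v)$ of closed intervals contained in $[0,1]$. A path is $\pi=\langle v_0,\dots,v_k\rangle$ with $(v_i,v_{i+1})\in E$; vertices may repeat, and all quantities below are attached to positions $i$ in the path. Set $\ell(v_{-1},v_0):=0$, $\ell(v_k,v_{k+1}):=0$, $\ell(v_i):=\sum_{j=0}^{i-1}\ell(v_j,v_{j+1})$, $\ell^+(v_i):=\ell(v_i)+\tfrac12\ell(v_i,v_{i+1})$, $\ell^-(v_i):=\ell(v_i)-\tfrac12\ell(v_{i-1},v_i)$, and $\ell^+(v_i,v_j):=\ell^+(v_j)-\ell^+(v_i)$ (for any positions $i,j$). A timing profile of $\pi$ is a sequence of reals $\langle t_0,\dots,t_{k-1}\rangle$ with $t_0\ge \ell^+(v_0)$, $t_{i+1}\ge t_i+\ell^+(v_i,v_{i+1})$ for $0\le i\le k-2$, and $t_{k-1}+\ell^+(v_{k-1},v_k)\le 1$. For a vertex $u$ and $0\le t\le t'\le 1$, $R(u,t,t'):=\sum_{I\in\mathcal{I}(u)}|[t,t']\cap I|$ (length of intersection). With $t_{-1}:=0$, $t_k:=1$,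 the reward of a timing profile is $R(\pi,\mathcal{T}):=\sum_{i=0}^{k}R(v_i,t_{i-1},t_i)$; a timing profile is optimal if it maximizes this reward over all timing profiles of $\pi$. Critical times: define augmented interval sets per position, $J_i:=\mathcal{I}(v_i)$ for $0<i<k$, $J_0:=\mathcal{I}(v_0)\cup\{[\ell^+(v_0),\ell^+(v_0)]\}$, $J_k:=\mathcal{I}(v_k)\cup\{[1-\ell^+(v_{k-1},v_k),\,1-\ell^+(v_{k-1},v_k)]\}$. For positions $0\le a<b\le k$ let $C(a,b):=\{t_e:[t_s,t_e]\in J_a\}\cup\{t_s-(\ell^-(v_b)-\ell^+(v_a)):[t_s,t_e]\in J_b\}$. For each position $i$, $C_i:=\bigcup_{0\le a<b\le k}\{\tau+\ell^+(v_a,v_i):\tau\in C(a,b)\}$. *)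

theory Defs
  imports Main "HOL-Analysis.Analysis"
begin

text \<open>A closed interval [a,b] is represented by the pair (a,b) with
 0 \<le> a \<le> b \<le> 1. Edge lengths are a function len :: 'v \<Rightarrow> 'v \<Rightarrow> real.
 A path is a nonempty list p = [v_0,...,v_k], k = length p - 1; positions are nats.
 A timing profile is a function t :: nat \<Rightarrow> real of which only t 0, ..., t (k-1) matter.\<close>

definition task_assistance_graph ::
  "'v set \<Rightarrow> ('v \<times> 'v) set \<Rightarrow> ('v \<Rightarrow> 'v \<Rightarrow> real) \<Rightarrow> ('v \<Rightarrow> (real \<times> real) set) \<Rightarrow> bool" where
  "task_assistance_graph V E len Iv \<longleftrightarrow>
     E \<subseteq> V \<times> V \<and>
     (\<forall>(u,w)\<in>E. len u w \<ge> 0) \<and>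
     (\<forall>v\<in>V. finite (Iv v) \<and> (\<forall>(a,b)\<in>Iv v. 0 \<le> a \<and> a \<le> b \<and> b \<le> 1))"

definition is_path :: "'v set \<Rightarrow> ('v \<times> 'v) set \<Rightarrow> 'v list \<Rightarrow> bool" where
  "is_path V E p \<longleftrightarrow> p \<noteq> [] \<and> set p \<subseteq> V \<and>
     (\<forall>i. i + 1 < length p \<longrightarrow> (p ! i, p ! (i+1)) \<in> E)"

definition eright :: "('v \<Rightarrow> 'v \<Rightarrow> real) \<Rightarrow> 'v list \<Rightarrow> nat \<Rightarrow> real" where
  "eright len p i = (if i + 1 < length p then len (p ! i) (p ! (i+1)) else 0)"

definition eleft :: "('v \<Rightarrow> 'v \<Rightarrow> real) \<Rightarrow> 'v list \<Rightarrow> nat \<Rightarrow> real" where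
  "eleft len p i = (if 0 < i \<and> i < length p then len (p ! (i-1)) (p ! i) else 0)"

definition lpos :: "('v \<Rightarrow> 'v \<Rightarrow> real) \<Rightarrow> 'v list \<Rightarrow> nat \<Rightarrow> real" where
  "lpos len p i = (\<Sum>j<i. len (p ! j) (p ! (j+1)))"

definition lplus :: "('v \<Rightarrow> 'v \<Rightarrow> real) \<Rightarrow> 'v list \<Rightarrow> nat \<Rightarrow> real" where
  "lplus len p i = lpos len p i + eright len p i / 2"

definition lminus :: "('v \<Rightarrow> 'v \<Rightarrow> real) \<Rightarrow> 'v list \<Rightarrow> nat \<Rightarrow> real" where
  "lminus len p i = lpos len p i - eleft len p i / 2"

definition lplus2 :: "('v \<Rightarrow> 'v \<Rightarrow> real) \<Rightarrow> 'v list \<Rightarrow> nat \<Rightarrow> nat \<Rightarrow> real" where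
  "lplus2 len p i j = lplus len p j - lplus len p i"

definition timing_profile :: "('v \<Rightarrow> 'v \<Rightarrow> real) \<Rightarrow> 'v list \<Rightarrow> (nat \<Rightarrow> real) \<Rightarrow> bool" where
  "timing_profile len p t \<longleftrightarrow>
     (let k = length p - 1 in
       t 0 \<ge> lplus len p 0 \<and>
       (\<forall>i. i + 1 \<le> k - 1 \<longrightarrow> t (i+1) \<ge> t i + lplus2 len p i (i+1)) \<and>
       t (k-1) + lplus2 len p (k-1) k \<le> 1)"

definition overlap :: "real \<Rightarrow> real \<Rightarrow> real \<times> real \<Rightarrow> real" where
  "overlap t t' I = max 0 (min t' (snd I) - max t (fst I))"

definition Rv :: "('v \<Rightarrow> (real \<times> real) set) \<Rightarrow> 'v \<Rightarrow> real \<Rightarrow> real \<Rightarrow> real" where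
  "Rv Iv u t t' = (\<Sum>I\<in>Iv u. overlap t t' I)"

text \<open>extended times: t_{-1} = 0 (represented as tprev at position 0), t_k = 1\<close>
definition reward :: "('v \<Rightarrow> (real \<times> real) set) \<Rightarrow> 'v list \<Rightarrow> (nat \<Rightarrow> real) \<Rightarrow> real" where
  "reward Iv p t =
     (let k = length p - 1 in
       \<Sum>i\<in>{0..k}. Rv Iv (p ! i) (if i = 0 then 0 else t (i-1)) (if i = k then 1 else t i))"

definition optimal_profile ::
  "('v \<Rightarrow> 'v \<Rightarrow> real) \<Rightarrow> ('v \<Rightarrow> (real \<times> real) set) \<Rightarrow> 'v list \<Rightarrow> (nat \<Rightarrow> real) \<Rightarrow> bool" where
  "optimal_profile len Iv p t \<longleftrightarrow> timing_profile len p t \<and>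
     (\<forall>t'. timing_profile len p t' \<longrightarrow> reward Iv p t' \<le> reward Iv p t)"

definition Jset :: "('v \<Rightarrow> 'v \<Rightarrow> real) \<Rightarrow> ('v \<Rightarrow> (real \<times> real) set) \<Rightarrow> 'v list \<Rightarrow> nat \<Rightarrow> (real \<times> real) set" where
  "Jset len Iv p i =
     (let k = length p - 1 in
       Iv (p ! i)
       \<union> (if i = 0 then {(lplus len p 0, lplus len p 0)} else {})
       \<union> (if i = k then {(1 - lplus2 len p (k-1) k, 1 - lplus2 len p (k-1) k)} else {}))"

definition Cab :: "('v \<Rightarrow> 'v \<Rightarrow> real) \<Rightarrow> ('v \<Rightarrow> (real \<times> real) set) \<Rightarrow> 'v list \<Rightarrow> nat \<Rightarrow> nat \<Rightarrow> real set" where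
  "Cab len Iv p a b =
     {te. \<exists>ts. (ts, te) \<in> Jset len Iv p a}
     \<union> {ts - (lminus len p b - lplus len p a) | ts te. (ts, te) \<in> Jset len Iv p b}"

definition critical_times :: "('v \<Rightarrow> 'v \<Rightarrow> real) \<Rightarrow> ('v \<Rightarrow> (real \<times> real) set) \<Rightarrow> 'v list \<Rightarrow> nat \<Rightarrow> real set" where
  "critical_times len Iv p i =
     (\<Union>a\<in>{0..length p - 1}. \<Union>b\<in>{0..length p - 1}.
        if a < b then (\<lambda>\<tau>. \<tau> + lplus2 len p a i) ` Cab len Iv p a b else {})"

end

theory Submission
  imports Defs
begin

definition affon :: "real \<Rightarrow> real \<Rightarrow> (real \<Rightarrow> real) \<Rightarrow> bool" where
  "affon a b h \<longleftrightarrow> (\<exists>\<alpha> \<beta>. \<forall>y\<in>{a..b}. h y = \<alpha> + \<beta> * y)"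

lemma affon_const: "affon a b (\<lambda>y. c)"
  unfolding affon_def by (rule exI[of _ c], rule exI[of _ 0]) simp

lemma affon_diff: "affon a b f \<Longrightarrow> affon a b g \<Longrightarrow> affon a b (\<lambda>y. f y - g y)"
  unfolding affon_def
proof (elim exE)
  fix a1 b1 a2 b2 assume "\<forall>y\<in>{a..b}. f y = a1 + b1 * y" "\<forall>y\<in>{a..b}. g y = a2 + b2 * y"
  then show "\<exists>\<alpha> \<beta>. \<forall>y\<in>{a..b}. f y - g y = \<alpha> + \<beta> * y"
    by (intro exI[of _ "a1 - a2"] exI[of _ "b1 - b2"]) (auto simp: algebra_simps)
qed

lemma affon_min: assumes "\<forall>y. a < y \<and> y < b \<longrightarrow> y + r \<noteq> c"
  shows "affon a b (\<lambda>y. min (y + r) c)"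
proof (cases "c - r \<le> a")
  case True
  then show ?thesis unfolding affon_def by (intro exI[of _ c] exI[of _ 0]) auto
next
  case False
  then have "c - r \<ge> b" using assms[rule_format, of "c - r"] by force
  then show ?thesis unfolding affon_def by (intro exI[of _ r] exI[of _ 1]) auto
qed

lemma affon_max: assumes "\<forall>y. a < y \<and> y < b \<longrightarrow> y + r \<noteq> c"
  shows "affon a b (\<lambda>y. max (y + r) c)"
proof (cases "c - r \<le> a")
  case True
  then show ?thesis unfolding affon_def by (intro exI[of _ r] exI[of _ 1]) auto
next
  case False
  then have "c - r \<ge> b" using assms[rule_format, of "c - r"] by force
  then show ?thesis unfolding affon_def by (intro exI[of _ c] exI[of _ 0]) auto
qed

lemma max0_convex:
  fixes w1 w2 u v :: real
  assumes "w1 \<ge> 0" "w2 \<ge> 0"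
  shows "max 0 (w1 * u + w2 * v) \<le> w1 * max 0 u + w2 * max 0 v"
proof -
  have "w1 * u \<le> w1 * max 0 u" using assms by (simp add: mult_left_mono)
  moreover have "w2 * v \<le> w2 * max 0 v" using assms by (simp add: mult_left_mono)
  moreover have "0 \<le> w1 * max 0 u + w2 * max 0 v" using assms by simp
  ultimately show ?thesis by simp
qed

lemma affon_convex:
  assumes "affon a b h" "a \<le> x" "x \<le> b" "a < b"
  shows "max 0 (h x) \<le> (b - x) / (b - a) * max 0 (h a) + (x - a) / (b - a) * max 0 (h b)"
proof -
  obtain \<alpha> \<beta> where h: "\<forall>y\<in>{a..b}. h y = \<alpha> + \<beta> * y" using assms(1) unfolding affon_def by blast
  have e: "(b-a)*(\<alpha>+\<beta>*x) = (b-x)*(\<alpha>+\<beta>*a) + (x-a)*(\<alpha>+\<beta>*b)" by algebra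
  have "h x = (b - x) / (b - a) * h a + (x - a) / (b - a) * h b"
  proof -
    have "h x = \<alpha>+\<beta>*x" "h a = \<alpha>+\<beta>*a" "h b = \<alpha>+\<beta>*b" using h assms by auto
    moreover have "\<alpha>+\<beta>*x = ((b-x)*(\<alpha>+\<beta>*a) + (x-a)*(\<alpha>+\<beta>*b)) / (b-a)"
      using e assms(4) by (simp add: field_simps)
    ultimately show ?thesis by (simp add: add_divide_distrib)
  qed
  then show ?thesis using max0_convex[of "(b - x) / (b - a)" "(x - a) / (b - a)" "h a" "h b"] assms
    by simp
qed



context
  fixes len :: "'v \<Rightarrow> 'v \<Rightarrow> real" and Iv :: "'v \<Rightarrow> (real \<times> real) set" and p :: "'v list"
  assumes finI: "\<And>m. m < length p \<Longrightarrow> finite (Iv (p ! m))"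
    and len2: "length p \<ge> 2"
begin

lemma C_intro:
  assumes "a < b" "b \<le> length p - 1" "\<tau> \<in> Cab len Iv p a b"
  shows "\<tau> + lplus2 len p a j \<in> critical_times len Iv p j"
  unfolding critical_times_def
  apply (rule UN_I[of a], use assms in simp)
  apply (rule UN_I[of b], use assms in simp)
  using assms by auto

lemma C_elim:
  assumes "x \<in> critical_times len Iv p j"
  obtains a b \<tau> where "a < b" "b \<le> length p - 1" "\<tau> \<in> Cab len Iv p a b" "x = \<tau> + lplus2 len p a j"
  using assms unfolding critical_times_def by (auto split: if_splits)

lemma C_shift:
  assumes "x \<in> critical_times len Iv p j"
  shows "x + lplus len p i - lplus len p j \<in> critical_times len Iv p i"
proof -
  obtain a b \<tau> where "a < b" "b \<le> length p - 1" "\<tau> \<in> Cab len Iv p a b" "x = \<tau> + lplus2 len p a j"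
    using C_elim assms by blast
  moreover have "x + lplus len p i - lplus len p j = \<tau> + lplus2 len p a i"
    using calculation by (simp add: lplus2_def)
  ultimately show ?thesis using C_intro by metis
qed

lemma lminus_eq:
  assumes "1 \<le> m" "m \<le> length p - 1"
  shows "lminus len p m = lplus len p (m - 1)"
proof -
  obtain m' where m: "m = Suc m'" using assms by (cases m) auto
  show ?thesis using assms unfolding m lminus_def lplus_def lpos_def eleft_def eright_def
    by simp
qed

lemma lp_in_C: "lplus len p j \<in> critical_times len Iv p j"
proof -
  have "lplus len p 0 \<in> Cab len Iv p 0 1"
    unfolding Cab_def Jset_def Let_def by auto
  from C_intro[OF _ _ this, of j] len2 show ?thesis by (simp add: lplus2_def)
qed

lemma top_in_C: "1 - lplus len p (length p - 1) + lplus len p j \<in> critical_times len Iv p j"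
proof -
  let ?k = "length p - 1"
  let ?ts = "1 - lplus2 len p (?k - 1) ?k"
  have "?ts - (lminus len p ?k - lplus len p 0) \<in> Cab len Iv p 0 ?k"
    unfolding Cab_def Jset_def Let_def by (intro UnI2 CollectI exI[of _ ?ts] conjI) auto
  from C_intro[OF _ _ this, of j] len2
  have "?ts - (lminus len p ?k - lplus len p 0) + lplus2 len p 0 j \<in> critical_times len Iv p j"
    by simp
  moreover have "lminus len p ?k = lplus len p (?k - 1)" using lminus_eq[of ?k] len2 by simp
  ultimately have "1 + (lplus len p j - lplus len p ?k) \<in> critical_times len Iv p j"
    by (simp add: lplus2_def)
  moreover have "1 + (lplus len p j - lplus len p ?k) = 1 - lplus len p ?k + lplus len p j" by simp
  ultimately show ?thesis by metis
qed

lemma te_in_C: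
  assumes "m < length p - 1" "(ts, te) \<in> Iv (p ! m)"
  shows "te \<in> critical_times len Iv p m"
proof -
  have "te \<in> Cab len Iv p m (m+1)"
    unfolding Cab_def Jset_def Let_def using assms by auto
  from C_intro[OF _ _ this, of m] assms show ?thesis by (simp add: lplus2_def)
qed

lemma ts_in_C:
  assumes "1 \<le> m" "m \<le> length p - 1" "(ts, te) \<in> Iv (p ! m)"
  shows "ts \<in> critical_times len Iv p (m - 1)"
proof -
  have "ts - (lminus len p m - lplus len p (m-1)) \<in> Cab len Iv p (m-1) m"
    unfolding Cab_def Jset_def Let_def using assms by blast
  from C_intro[OF _ _ this, of "m-1"] assms lminus_eq[OF assms(1,2)]
  show ?thesis by (simp add: lplus2_def)
qed

lemma finite_Jset: "i < length p \<Longrightarrow> finite (Jset len Iv p i)"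
  unfolding Jset_def Let_def using finI by auto

lemma finite_Cab: "a < length p \<Longrightarrow> b < length p \<Longrightarrow> finite (Cab len Iv p a b)"
proof -
  assume a: "a < length p" and b: "b < length p"
  have "{te. \<exists>ts. (ts, te) \<in> Jset len Iv p a} = snd ` Jset len Iv p a" by force
  moreover have "{ts - (lminus len p b - lplus len p a) | ts te. (ts, te) \<in> Jset len Iv p b}
     = (\<lambda>x. fst x - (lminus len p b - lplus len p a)) ` Jset len Iv p b" by force
  ultimately show ?thesis unfolding Cab_def using finite_Jset a b by simp
qed

lemma finite_C: "finite (critical_times len Iv p j)"
  unfolding critical_times_def using finite_Cab len2 by auto

lemma feas_iff: "timing_profile len p t \<longleftrightarrow>
   (t 0 - lplus len p 0 \<ge> 0 \<and>
    (\<forall>j. j + 1 \<le> length p - 1 - 1 \<longrightarrow> t j - lplus len p j \<le> t (j+1) - lplus len p (j+1)) \<and>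
    t (length p - 1 - 1) - lplus len p (length p - 1 - 1) \<le> 1 - lplus len p (length p - 1))"
  unfolding timing_profile_def lplus2_def Let_def by auto

lemma feas_mono:
  assumes "timing_profile len p t" "j \<le> j'" "j' < length p - 1"
  shows "t j - lplus len p j \<le> t j' - lplus len p j'"
  using assms(2,3)
proof (induction j' rule: dec_induct)
  case base then show ?case by simp
next
  case (step n)
  have "n + 1 \<le> length p - 1 - 1" using step by simp
  then have "t n - lplus len p n \<le> t (n+1) - lplus len p (n+1)"
    using assms(1) unfolding feas_iff by blast
  then show ?case using step by simp
qed

lemma reward_eq: "reward Iv p t = (\<Sum>m\<in>{0..length p - 1}. \<Sum>I\<in>Iv (p ! m).
   max 0 (min (if m = length p - 1 then 1 else t m) (snd I) - max (if m = 0 then 0 else t (m - 1)) (fst I)))"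
  unfolding reward_def Rv_def overlap_def Let_def by simp


definition NC :: "(nat \<Rightarrow> real) \<Rightarrow> real set" where
  "NC t = (\<lambda>j. t j - lplus len p j) ` {j. j < length p - 1 \<and> t j \<notin> critical_times len Iv p j}"

lemma finite_NC: "finite (NC t)"
  unfolding NC_def by simp

lemma step:
  assumes feas: "timing_profile len p t" and i: "i < length p - 1"
    and nc: "t i \<notin> critical_times len Iv p i"
  shows "\<exists>t'. timing_profile len p t' \<and> reward Iv p t \<le> reward Iv p t' \<and> NC t' \<subset> NC t"
proof -
  let ?k = "length p - 1"
  let ?lp = "lplus len p"
  let ?C = "critical_times len Iv p"
  define \<sigma> where "\<sigma> = t i - ?lp i"
  define E where "E = (\<lambda>x. x - ?lp i) ` ?C i \<union> (\<lambda>j. t j - ?lp j) ` {..<?k} \<union> {0, 1 - ?lp ?k}"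
  have finE: "finite E" unfolding E_def using finite_C by auto
  define sh where "sh y = (\<lambda>j. if j < ?k \<and> t j - ?lp j = \<sigma> then y + ?lp j else t j)" for y
  have sh_sigma: "sh \<sigma> = t" unfolding sh_def by (auto simp: fun_eq_iff)
  have s0: "0 \<le> t 0 - ?lp 0" using feas feas_iff by blast
  have s0le: "t 0 - ?lp 0 \<le> \<sigma>" using feas_mono[OF feas, of 0 i] i \<sigma>_def by simp
  have sKge: "\<sigma> \<le> t (?k-1) - ?lp (?k-1)" using feas_mono[OF feas, of i "?k-1"] i \<sigma>_def by simp
  have sKle: "t (?k-1) - ?lp (?k-1) \<le> 1 - ?lp ?k" using feas feas_iff by blast
  have ncB: "t j \<notin> ?C j" if "t j - ?lp j = \<sigma>" for j
  proof
    assume "t j \<in> ?C j"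
    from C_shift[OF this, of i] have "t j + ?lp i - ?lp j \<in> ?C i" .
    moreover have "t j + ?lp i - ?lp j = t i" using that \<sigma>_def by simp
    ultimately show False using nc by simp
  qed
  have "\<sigma> \<noteq> 0"
  proof
    assume "\<sigma> = 0" then have "t i = ?lp i" using \<sigma>_def by simp
    then show False using nc lp_in_C by simp
  qed
  with s0 s0le have \<sigma>pos: "0 < \<sigma>" by simp
  have "\<sigma> \<noteq> 1 - ?lp ?k"
  proof
    assume "\<sigma> = 1 - ?lp ?k" then have "t i = 1 - ?lp ?k + ?lp i" using \<sigma>_def by simp
    then show False using nc top_in_C by simp
  qed
  with sKge sKle have \<sigma>top: "\<sigma> < 1 - ?lp ?k" by simp
  define lo where "lo = Max {e\<in>E. e < \<sigma>}"
  define hi where "hi = Min {e\<in>E. \<sigma> < e}"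
  have fl: "finite {e\<in>E. e < \<sigma>}" "finite {e\<in>E. \<sigma> < e}" using finE by auto
  have 0: "0 \<in> {e\<in>E. e < \<sigma>}" using \<sigma>pos unfolding E_def by auto
  have 1: "1 - ?lp ?k \<in> {e\<in>E. \<sigma> < e}" using \<sigma>top unfolding E_def by auto
  have lo_in: "lo \<in> {e\<in>E. e < \<sigma>}" unfolding lo_def using fl 0 by (intro Max_in) auto
  have lo_ge: "e \<le> lo" if "e \<in> E" "e < \<sigma>" for e
    unfolding lo_def using fl that by (intro Max_ge) auto
  have hi_in: "hi \<in> {e\<in>E. \<sigma> < e}" unfolding hi_def using fl 1 by (intro Min_in) auto
  have hi_le: "hi \<le> e" if "e \<in> E" "\<sigma> < e" for e
    unfolding hi_def using fl that by (intro Min_le) auto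
  have lo0: "0 \<le> lo" using lo_ge 0 by auto
  have hi1: "hi \<le> 1 - ?lp ?k" using hi_le 1 by auto
  have gap: "y = \<sigma>" if "lo < y" "y < hi" "y \<in> E" for y
  proof (rule ccontr)
    assume "y \<noteq> \<sigma>"
    then consider "y < \<sigma>" | "\<sigma> < y" by linarith
    then show False
    proof cases
      case 1 then show False using lo_ge[OF that(3)] that by simp
    next
      case 2 then show False using hi_le[OF that(3)] that by simp
    qed
  qed
  have crit_E: "y \<in> E" if "y + ?lp j \<in> ?C j" for y j
  proof -
    from C_shift[OF that, of i] have "y + ?lp j + ?lp i - ?lp j \<in> ?C i" .
    then have "y + ?lp i \<in> ?C i" by simp
    then have "(\<lambda>x. x - ?lp i) (y + ?lp i) \<in> (\<lambda>x. x - ?lp i) ` ?C i" by blast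
    then show ?thesis unfolding E_def by simp
  qed
  have sE: "t j - ?lp j \<in> E" if "j < ?k" for j unfolding E_def using that by blast
  have below: "t j - ?lp j \<le> lo" if "j < ?k" "t j - ?lp j < \<sigma>" for j
    using lo_ge[OF sE[OF that(1)] that(2)] .
  have above: "hi \<le> t j - ?lp j" if "j < ?k" "\<sigma> < t j - ?lp j" for j
    using hi_le[OF sE[OF that(1)] that(2)] .
  have lohi: "lo < \<sigma>" "\<sigma> < hi" using lo_in hi_in by auto
  have feas_sh: "timing_profile len p (sh y)" if y: "lo \<le> y" "y \<le> hi" for y
  proof -
    have A: "0 \<le> sh y 0 - ?lp 0" using s0 y lo0 unfolding sh_def by auto
    have B: "sh y j - ?lp j \<le> sh y (j+1) - ?lp (j+1)" if j: "j + 1 \<le> ?k - 1" for j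
    proof -
      have m: "t j - ?lp j \<le> t (j+1) - ?lp (j+1)" using feas j unfolding feas_iff by blast
      have jk: "j < ?k" "j + 1 < ?k" using j len2 by auto
      show ?thesis
      proof (cases "t j - ?lp j = \<sigma>"; cases "t (j+1) - ?lp (j+1) = \<sigma>")
        assume a: "t j - ?lp j = \<sigma>" "t (j+1) - ?lp (j+1) \<noteq> \<sigma>"
        then have "hi \<le> t (j+1) - ?lp (j+1)" using above[OF jk(2)] m by simp
        then show ?thesis using a jk y unfolding sh_def by simp
      next
        assume a: "t j - ?lp j \<noteq> \<sigma>" "t (j+1) - ?lp (j+1) = \<sigma>"
        then have "t j - ?lp j \<le> lo" using below[OF jk(1)] m by simp
        then show ?thesis using a jk y unfolding sh_def by simp
      qed (use m jk in \<open>auto simp: sh_def\<close>)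
    qed
    have Cc: "sh y (?k-1) - ?lp (?k-1) \<le> 1 - ?lp ?k" using sKle y hi1 unfolding sh_def by auto
    show ?thesis unfolding feas_iff using A B Cc by blast
  qed
  define h where "h m I y = min (if m = ?k then 1 else sh y m) (snd I)
      - max (if m = 0 then 0 else sh y (m-1)) (fst I)" for m I y
  have rew: "reward Iv p (sh y) = (\<Sum>m\<in>{0..?k}. \<Sum>I\<in>Iv (p!m). max 0 (h m I y))" for y
    unfolding h_def by (rule reward_eq)
  have aff: "affon lo hi (h m I)" if m: "m \<in> {0..?k}" and I: "I \<in> Iv (p!m)" for m I
  proof -
    obtain ts te where I_eq: "I = (ts,te)" by force
    have R: "affon lo hi (\<lambda>y. min (if m = ?k then 1 else sh y m) te)"
    proof (cases "m < ?k \<and> t m - ?lp m = \<sigma>")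
      case True
      then have eq: "(\<lambda>y. min (if m = ?k then 1 else sh y m) te) = (\<lambda>y. min (y + ?lp m) te)"
        unfolding sh_def by auto
      have "\<forall>y. lo < y \<and> y < hi \<longrightarrow> y + ?lp m \<noteq> te"
      proof (intro allI impI notI)
        fix y assume y: "lo < y \<and> y < hi" "y + ?lp m = te"
        have teC: "te \<in> ?C m" using te_in_C[of m ts te] True I I_eq by simp
        then have "y + ?lp m \<in> ?C m" using y by simp
        then have "y \<in> E" by (rule crit_E)
        then have "y = \<sigma>" using gap y by simp
        then have "t m = te" using y True by simp
        then show False using teC ncB[of m] True by auto
      qed
      then show ?thesis unfolding eq by (rule affon_min)
    next
      case False
      then have eq: "(\<lambda>y. min (if m = ?k then 1 else sh y m) te)
          = (\<lambda>y. min (if m = ?k then 1 else t m) te)" unfolding sh_def by auto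
      show ?thesis unfolding eq by (rule affon_const)
    qed
    have L: "affon lo hi (\<lambda>y. max (if m = 0 then 0 else sh y (m-1)) ts)"
    proof (cases "1 \<le> m \<and> m - 1 < ?k \<and> t (m-1) - ?lp (m-1) = \<sigma>")
      case True
      then have eq: "(\<lambda>y. max (if m = 0 then 0 else sh y (m-1)) ts) = (\<lambda>y. max (y + ?lp (m-1)) ts)"
        unfolding sh_def by auto
      have "\<forall>y. lo < y \<and> y < hi \<longrightarrow> y + ?lp (m-1) \<noteq> ts"
      proof (intro allI impI notI)
        fix y assume y: "lo < y \<and> y < hi" "y + ?lp (m-1) = ts"
        have tsC: "ts \<in> ?C (m-1)" using ts_in_C[of m ts te] True I I_eq m by simp
        then have "y + ?lp (m-1) \<in> ?C (m-1)" using y by simp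
        then have "y \<in> E" by (rule crit_E)
        then have "y = \<sigma>" using gap y by simp
        then have "t (m-1) = ts" using y True by simp
        then show False using tsC ncB[of "m-1"] True by auto
      qed
      then show ?thesis unfolding eq by (rule affon_max)
    next
      case False
      then have eq: "(\<lambda>y. max (if m = 0 then 0 else sh y (m-1)) ts)
          = (\<lambda>y. max (if m = 0 then 0 else t (m-1)) ts)" unfolding sh_def by auto
      show ?thesis unfolding eq by (rule affon_const)
    qed
    show ?thesis unfolding h_def I_eq using affon_diff[OF R L] by simp
  qed
  define w1 where "w1 = (hi - \<sigma>) / (hi - lo)"
  define w2 where "w2 = (\<sigma> - lo) / (hi - lo)"
  have hl: "hi - lo > 0" using lohi by simp
  have w: "0 \<le> w1" "0 \<le> w2" "w1 + w2 = 1" using lohi hl unfolding w1_def w2_def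
    by (auto simp: add_divide_distrib[symmetric])
  have main: "reward Iv p t \<le> w1 * reward Iv p (sh lo) + w2 * reward Iv p (sh hi)"
  proof -
    have "reward Iv p t = (\<Sum>m\<in>{0..?k}. \<Sum>I\<in>Iv (p!m). max 0 (h m I \<sigma>))"
      using rew[of \<sigma>] sh_sigma by simp
    also have "\<dots> \<le> (\<Sum>m\<in>{0..?k}. \<Sum>I\<in>Iv (p!m). w1 * max 0 (h m I lo) + w2 * max 0 (h m I hi))"
      unfolding w1_def w2_def using aff affon_convex lohi
      by (intro sum_mono) (meson less_imp_le order.strict_trans)
    also have "\<dots> = w1 * (\<Sum>m\<in>{0..?k}. \<Sum>I\<in>Iv (p!m). max 0 (h m I lo))
        + w2 * (\<Sum>m\<in>{0..?k}. \<Sum>I\<in>Iv (p!m). max 0 (h m I hi))"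
      by (simp add: sum.distrib sum_distrib_left)
    also have "\<dots> = w1 * reward Iv p (sh lo) + w2 * reward Iv p (sh hi)" by (simp add: rew)
    finally show ?thesis .
  qed
  have "reward Iv p t \<le> reward Iv p (sh lo) \<or> reward Iv p t \<le> reward Iv p (sh hi)"
  proof -
    let ?a = "reward Iv p (sh lo)" and ?b = "reward Iv p (sh hi)"
    have "w1 * ?a \<le> w1 * max ?a ?b" "w2 * ?b \<le> w2 * max ?a ?b"
      using w by (auto intro: mult_left_mono)
    then have "w1 * ?a + w2 * ?b \<le> (w1 + w2) * max ?a ?b" by (simp add: distrib_right)
    then have "reward Iv p t \<le> max ?a ?b" using main w by simp
    then show ?thesis by (simp add: le_max_iff_disj)
  qed
  then obtain y where y: "y = lo \<or> y = hi" "reward Iv p t \<le> reward Iv p (sh y)" by blast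
  have yE: "y \<in> E" "y \<noteq> \<sigma>" "lo \<le> y" "y \<le> hi" using y lo_in hi_in lohi by auto
  have sub: "NC (sh y) \<subseteq> NC t - {\<sigma>}"
  proof
    fix x assume "x \<in> NC (sh y)"
    then obtain j where j: "j < ?k" "sh y j \<notin> ?C j" "x = sh y j - ?lp j" unfolding NC_def by auto
    show "x \<in> NC t - {\<sigma>}"
    proof (cases "t j - ?lp j = \<sigma>")
      case True
      then have shj: "sh y j = y + ?lp j" "x = y" using j unfolding sh_def by auto
      from yE(1) consider (a) x' where "x' \<in> ?C i" "y = x' - ?lp i"
        | (b) j' where "j' < ?k" "y = t j' - ?lp j'" | (c) "y = 0" | (d) "y = 1 - ?lp ?k"
        unfolding E_def by blast
      then show ?thesis
      proof cases
        case a
        from C_shift[OF a(1), of j] have "x' + ?lp j - ?lp i \<in> ?C j" .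
        moreover have "x' + ?lp j - ?lp i = y + ?lp j" using a(2) by simp
        ultimately have "y + ?lp j \<in> ?C j" by simp
        then show ?thesis using j shj by simp
      next
        case b
        have "t j' \<notin> ?C j'"
        proof
          assume "t j' \<in> ?C j'"
          from C_shift[OF this, of j] have "t j' + ?lp j - ?lp j' \<in> ?C j" .
          moreover have "t j' + ?lp j - ?lp j' = y + ?lp j" using b(2) by simp
          ultimately have "y + ?lp j \<in> ?C j" by simp
          then show False using j shj by simp
        qed
        then have "y \<in> NC t" unfolding NC_def using b by blast
        then show ?thesis using shj yE by simp
      next
        case c then show ?thesis using j shj lp_in_C by simp
      next
        case d
        have "y + ?lp j \<in> ?C j" using top_in_C[of j] d by simp
        then show ?thesis using j shj by simp
      qed
    next
      case False
      then have "sh y j = t j" unfolding sh_def by auto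
      then show ?thesis using j False unfolding NC_def by auto
    qed
  qed
  moreover have "\<sigma> \<in> NC t" unfolding NC_def using i nc \<sigma>_def by blast
  ultimately have "NC (sh y) \<subset> NC t" by blast
  then show ?thesis using feas_sh[OF yE(3,4)] y(2) by blast
qed


lemma exists_crit:
  "timing_profile len p t \<Longrightarrow> \<exists>t'. timing_profile len p t' \<and> reward Iv p t \<le> reward Iv p t'
      \<and> (\<forall>j < length p - 1. t' j \<in> critical_times len Iv p j)"
proof (induction "card (NC t)" arbitrary: t rule: less_induct)
  case less
  show ?case
  proof (cases "\<forall>j < length p - 1. t j \<in> critical_times len Iv p j")
    case True
    then show ?thesis using less.prems by blast
  next
    case False
    then obtain i where i: "i < length p - 1" "t i \<notin> critical_times len Iv p i" by blast
    from step[OF less.prems i] obtain t' where t': "timing_profile len p t'"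
      "reward Iv p t \<le> reward Iv p t'" "NC t' \<subset> NC t" by blast
    have "card (NC t') < card (NC t)" using t'(3) finite_NC by (rule psubset_card_mono[rotated])
    from less.hyps[OF this t'(1)] obtain t'' where "timing_profile len p t''"
      "reward Iv p t' \<le> reward Iv p t''" "\<forall>j < length p - 1. t'' j \<in> critical_times len Iv p j"
      by blast
    then show ?thesis using t'(2) by (meson order_trans)
  qed
qed

lemma feas_restrict: "timing_profile len p (restrict t {..<length p - 1}) \<longleftrightarrow> timing_profile len p t"
  unfolding timing_profile_def Let_def using len2 by (auto simp: restrict_def)

lemma reward_restrict: "reward Iv p (restrict t {..<length p - 1}) = reward Iv p t"
  unfolding reward_eq
  by (intro sum.cong refl) (auto simp: restrict_def)

lemma main_exists:
  assumes "\<exists>t. timing_profile len p t"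
  shows "\<exists>t. optimal_profile len Iv p t \<and> (\<forall>i < length p - 1. t i \<in> critical_times len Iv p i)"
proof -
  let ?k = "length p - 1"
  let ?C = "critical_times len Iv p"
  define S where "S = {t \<in> PiE {..<?k} ?C. timing_profile len p t}"
  have "finite (PiE {..<?k} ?C)" by (rule finite_PiE) (auto simp: finite_C)
  moreover have "S \<subseteq> PiE {..<?k} ?C" unfolding S_def by blast
  ultimately have finS: "finite S" using finite_subset by blast
  have cand: "\<exists>t'\<in>S. reward Iv p t \<le> reward Iv p t'" if tp: "timing_profile len p t" for t
  proof -
    obtain t' where t': "timing_profile len p t'" "reward Iv p t \<le> reward Iv p t'"
      "\<forall>j < ?k. t' j \<in> ?C j" using exists_crit[OF tp] by blast
    have "restrict t' {..<?k} \<in> S" unfolding S_def using t' feas_restrict by auto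
    then show ?thesis using t'(2) reward_restrict by metis
  qed
  obtain t0 where "timing_profile len p t0" using assms by blast
  then have ne: "S \<noteq> {}" using cand by blast
  define M where "M = Max (reward Iv p ` S)"
  have "M \<in> reward Iv p ` S" unfolding M_def using finS ne by (intro Max_in) auto
  then obtain tm where tm: "tm \<in> S" "reward Iv p tm = M" by auto
  have Mge: "reward Iv p x \<le> M" if "x \<in> S" for x unfolding M_def using finS that by (intro Max_ge) auto
  have "optimal_profile len Iv p tm"
    unfolding optimal_profile_def
  proof (intro conjI allI impI)
    show "timing_profile len p tm" using tm S_def by auto
  next
    fix t' assume "timing_profile len p t'"
    then obtain t'' where "t'' \<in> S" "reward Iv p t' \<le> reward Iv p t''" using cand by blast
    then show "reward Iv p t' \<le> reward Iv p tm" using Mge tm by force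
  qed
  moreover have "\<forall>i < ?k. tm i \<in> ?C i" using tm(1) unfolding S_def by auto
  ultimately show ?thesis by blast
qed

end

theorem theorem1:
  fixes V :: "'v set" and E :: "('v \<times> 'v) set" and len :: "'v \<Rightarrow> 'v \<Rightarrow> real"
    and Iv :: "'v \<Rightarrow> (real \<times> real) set" and p :: "'v list"
  assumes "task_assistance_graph V E len Iv"
    and "is_path V E p"
    and "length p \<ge> 2"
    and "\<exists>t. timing_profile len p t"
  shows "\<exists>t. optimal_profile len Iv p t \<and>
           (\<forall>i < length p - 1. t i \<in> critical_times len Iv p i)"
proof -
  have "finite (Iv (p ! m))" if "m < length p" for m
  proof -
    have "p ! m \<in> V" using assms(2) that unfolding is_path_def by (auto dest: nth_mem)
    then show ?thesis using assms(1) unfolding task_assistance_graph_def by blast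
  qed
  then show ?thesis using main_exists assms(3,4) by blast
qed

end
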